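(* Let $d\ge1$, $P\subseteq\mathbb R\times[d]$, $\alpha\in(0,1]$ and $\beta=1-(1-\alpha)^{1/(2d)}$. Let $\mathcal C_1,\dots,\mathcal C_{2d}$ be finite subfamilies of $\mathcal C_{\equiv}(P)$. If at least $\alpha|\mathcal C_1|\cdots|\mathcal C_{2d}|$ of the colorful $2d$-tuples $(C_1,\dots,C_{2d})\in\mathcal C_1\times\cdots\times\mathcal C_{2d}$ satisfy $C_1\cap\dots\cap C_{2d}\ne\emptyset$, then some $\mathcal C_i$ contains a subfamily of size $\beta|\mathcal C_i|$ whose members have a common point.
   Context: $[d]=\{1,\dots,d\}$. A (separated) $d$-interval is a set $I=\bigcup_{i\in[d]}\{(x,i): x\in I^{(i)}\}\subseteq\mathbb R\times[d]$ with each $I^{(i)}\subseteq\mathbb R$ convex (possibly empty). For $P\subseteq\mathbb R\times[d]$, $\mathcal C_{\equiv}(P)=\{I\cap P: I \text{ a } d\text{-interval}\}$. *)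

theory Defs
  imports "HOL-Analysis.Analysis"
begin

definition d_interval :: "nat \<Rightarrow> (real \<times> nat) set \<Rightarrow> bool" where
  "d_interval d I \<longleftrightarrow> (\<exists>J :: nat \<Rightarrow> real set. (\<forall>i\<in>{1..d}. convex (J i)) \<and>
      I = {(x, i). i \<in> {1..d} \<and> x \<in> J i})"

definition C_equiv :: "nat \<Rightarrow> (real \<times> nat) set \<Rightarrow> (real \<times> nat) set set" where
  "C_equiv d P = {I \<inter> P | I. d_interval d I}"

end

theory Submission
  imports Defs
begin

definition compat :: "(real \<times> nat) set set \<Rightarrow> nat \<Rightarrow> bool" where
  "compat F j \<longleftrightarrow> (\<forall>A\<in>F. \<forall>B\<in>F. \<forall>x y z. (x,j)\<in>A \<longrightarrow> (z,j)\<in>A \<longrightarrow> (y,j)\<in>B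
      \<longrightarrow> x \<le> y \<longrightarrow> y \<le> z \<longrightarrow> (y,j)\<in>A)"

lemma key:
  fixes F :: "(real \<times> nat) set set"
  assumes fin: "finite F" and ne: "F \<noteq> {}" and pts: "\<forall>A\<in>F. \<exists>x. (x,j)\<in>A"
    and cp: "compat F j"
  shows "\<exists>A0\<in>F. \<exists>q. (q,j)\<in>A0 \<and> (\<forall>B\<in>F. (\<exists>x. (x,j)\<in>B \<and> (x,j)\<in>A0) \<longrightarrow> (q,j)\<in>B)"
proof -
  define w where "w = (\<lambda>(A,B). SOME x::real. (x,j)\<in>A \<and> (x,j)\<in>B)"
  define W where "W = w ` {(A,B). A\<in>F \<and> B\<in>F \<and> (\<exists>x. (x,j)\<in>A \<and> (x,j)\<in>B)}"
  have finW: "finite W" unfolding W_def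
    by (rule finite_imageI, rule finite_subset[of _ "F \<times> F"]) (use fin in auto)
  have wp: "(w (A,B), j) \<in> A \<and> (w (A,B), j) \<in> B" if "\<exists>x. (x,j)\<in>A \<and> (x,j)\<in>B" for A B
    unfolding w_def using someI_ex[OF that] by simp
  have wW: "w (A,B) \<in> W" if "A\<in>F" "B\<in>F" "\<exists>x. (x,j)\<in>A \<and> (x,j)\<in>B" for A B
    unfolding W_def using that by blast
  define mx where "mx = (\<lambda>A. Max {x\<in>W. (x,j)\<in>A})"
  have mxp: "mx A \<in> {x\<in>W. (x,j)\<in>A} \<and> (\<forall>y\<in>{x\<in>W. (x,j)\<in>A}. y \<le> mx A)" if "A\<in>F" for A
  proof -
    have "w (A,A) \<in> {x\<in>W. (x,j)\<in>A}" using wW[OF that that] wp[of A A] pts that by auto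
    then have "{x\<in>W. (x,j)\<in>A} \<noteq> {}" by blast
    moreover have "finite {x\<in>W. (x,j)\<in>A}" using finW by simp
    ultimately show ?thesis unfolding mx_def using Max_in Max_ge by blast
  qed
  obtain A0 where A0: "A0\<in>F" "\<forall>B\<in>F. mx A0 \<le> mx B"
    using ex_min_if_finite[OF finite_imageI[OF fin, of mx]] ne
    by (metis (no_types, lifting) arg_min_if_finite(1) arg_min_if_finite(2) fin not_le)
  show ?thesis
  proof (intro bexI[OF _ A0(1)] exI[of _ "mx A0"] conjI ballI impI)
    show "(mx A0, j) \<in> A0" using mxp[OF A0(1)] by simp
    fix B assume B: "B\<in>F" "\<exists>x. (x,j)\<in>B \<and> (x,j)\<in>A0"
    have "w (B,A0) \<in> W" using wW[OF B(1) A0(1) B(2)] .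
    moreover have wB: "(w (B,A0), j) \<in> B" "(w (B,A0), j) \<in> A0" using wp[OF B(2)] by auto
    ultimately have "w (B,A0) \<le> mx A0" using mxp[OF A0(1)] by auto
    moreover have "mx A0 \<le> mx B" using A0(2) B(1) by auto
    moreover have "(mx B, j) \<in> B" using mxp[OF B(1)] by simp
    moreover have "(mx A0, j) \<in> A0" using mxp[OF A0(1)] by simp
    ultimately show "(mx A0, j) \<in> B" using cp B(1) A0(1) wB unfolding compat_def by blast
  qed
qed

lemma compat_mono: "F \<subseteq> G \<Longrightarrow> compat G j \<Longrightarrow> compat F j"
  unfolding compat_def by blast

definition dead :: "nat set \<Rightarrow> (nat \<Rightarrow> (real \<times> nat) set) \<Rightarrow> nat \<Rightarrow> bool" where
  "dead M f j \<longleftrightarrow> \<not> (\<exists>x. \<forall>m\<in>M. (x,j) \<in> f m)"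

lemma mainlem:
  fixes C :: "nat \<Rightarrow> (real \<times> nat) set set" and t :: "nat \<Rightarrow> real"
  assumes "finite M" "finite J" "2 * card J \<le> card M" "\<forall>m\<in>M. finite (C m)"
    "\<forall>j. compat (\<Union>m\<in>M. C m) j"
    "\<forall>m\<in>M. \<forall>p. real (card {A\<in>C m. p\<in>A}) \<le> t m"
  shows "(\<Prod>m\<in>M. max 0 (real (card (C m)) - t m))
     \<le> real (card {f\<in>PiE M C. \<forall>j\<in>J. dead M f j})"
  using assms
proof (induction "card J + (\<Sum>m\<in>M. card (C m))" arbitrary: J M C rule: less_induct)
  case less
  note finM = less.prems(1) and finJ = less.prems(2) and cardJM = less.prems(3)
    and finC = less.prems(4) and cpt = less.prems(5) and dep = less.prems(6)
  have t0: "0 \<le> t m" if "m\<in>M" for m using dep that by (meson of_nat_0_le_iff order.trans)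
  show ?case
  proof (cases "J = {}")
    case True
    have "(\<Prod>m\<in>M. max 0 (real (card (C m)) - t m)) \<le> (\<Prod>m\<in>M. real (card (C m)))"
      by (rule prod_mono) (use t0 in auto)
    also have "\<dots> = real (card (PiE M C))" by (simp add: card_PiE finM)
    finally show ?thesis using True by simp
  next
    case False
    then obtain j where jJ: "j\<in>J" by blast
    have cM: "2 \<le> card M" using cardJM finJ jJ
      by (metis One_nat_def Suc_leI card_gt_0_iff dual_order.trans empty_iff mult_le_mono2 nat_mult_1_right)
    define F where "F = {A. \<exists>m\<in>M. A\<in>C m \<and> (\<exists>x. (x,j)\<in>A)}"
    show ?thesis
    proof (cases "F = {}")
      case True
      have Mne: "M \<noteq> {}" using cM by auto
      have dj: "dead M f j" if "f \<in> PiE M C" for f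
      proof -
        obtain m where "m\<in>M" using Mne by blast
        then show ?thesis using True that unfolding F_def dead_def by auto
      qed
      have eq: "{f\<in>PiE M C. \<forall>j\<in>J. dead M f j} = {f\<in>PiE M C. \<forall>j\<in>J-{j}. dead M f j}"
        using dj jJ by blast
      have lt: "card (J - {j}) < card J" using jJ finJ by (simp add: card_gt_0_iff) (metis card_gt_0_iff diff_Suc_less empty_iff)
      have c2: "2 * card (J-{j}) \<le> card M" using cardJM jJ finJ by simp
      show ?thesis unfolding eq
      proof (rule less.hyps)
        show "card (J - {j}) + (\<Sum>m\<in>M. card (C m)) < card J + (\<Sum>m\<in>M. card (C m))"
          using lt by simp
      qed (use finM finJ finC cpt dep c2 in simp_all)
    next
      case False
      have finF: "finite F"
        by (rule finite_subset[of _ "\<Union>m\<in>M. C m"]) (use finM finC in \<open>auto simp: F_def\<close>)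
      have Fsub: "F \<subseteq> (\<Union>m\<in>M. C m)" unfolding F_def by blast
      have cpF: "compat F j" using compat_mono[OF Fsub] cpt by blast
      have Fpts: "\<forall>A\<in>F. \<exists>x. (x,j)\<in>A" unfolding F_def by blast
      obtain A0 q where A0: "A0\<in>F" "(q,j)\<in>A0"
        and A0q: "\<forall>B\<in>F. (\<exists>x. (x,j)\<in>B \<and> (x,j)\<in>A0) \<longrightarrow> (q,j)\<in>B"
        using key[OF finF False Fpts cpF] by blast
      obtain m0 where m0: "m0\<in>M" "A0 \<in> C m0" using A0(1) unfolding F_def by blast
      have "card (M - {m0}) \<ge> 1" using cM m0 finM by simp
      then have "M - {m0} \<noteq> {}" by (metis card.empty not_one_le_zero)
      then obtain m1 where m1: "m1 \<in> M" "m1 \<noteq> m0" by blast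
      define g where "g = (\<lambda>m. max 0 (real (card (C m)) - t m))"
      define C' where "C' = C(m0 := C m0 - {A0})"
      define M2 where "M2 = M - {m0, m1}"
      define J2 where "J2 = J - {j}"
      define D where "D = {f\<in>PiE M C. \<forall>j\<in>J. dead M f j}"
      define D' where "D' = {f\<in>PiE M C'. \<forall>j\<in>J. dead M f j}"
      define D2 where "D2 = {f\<in>PiE M2 C. \<forall>j\<in>J2. dead M2 f j}"
      define B1 where "B1 = {B\<in>C m1. (q,j) \<notin> B}"
      define E where "E = (\<lambda>(b,h). h(m0 := A0, m1 := b)) ` (B1 \<times> D2)"
      have sumC': "(\<Sum>m\<in>M. card (C' m)) < (\<Sum>m\<in>M. card (C m))"
      proof (rule sum_strict_mono_ex1[OF finM])
        show "\<forall>x\<in>M. card (C' x) \<le> card (C x)" unfolding C'_def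
          using finC by (auto intro: card_mono)
        show "\<exists>a\<in>M. card (C' a) < card (C a)" unfolding C'_def
          using finC m0 card_Diff1_less[of "C m0" A0] by (intro bexI[OF _ m0(1)]) auto
      qed
      have IH1: "(\<Prod>m\<in>M. max 0 (real (card (C' m)) - t m)) \<le> real (card D')"
        unfolding D'_def
      proof (rule less.hyps)
        show "card J + (\<Sum>m\<in>M. card (C' m)) < card J + (\<Sum>m\<in>M. card (C m))" using sumC' by simp
        show "\<forall>m\<in>M. finite (C' m)" using finC unfolding C'_def by auto
        have "(\<Union>m\<in>M. C' m) \<subseteq> (\<Union>m\<in>M. C m)" unfolding C'_def by auto
        then show "\<forall>j. compat (\<Union>m\<in>M. C' m) j" using cpt compat_mono by blast
        show "\<forall>m\<in>M. \<forall>p. real (card {A \<in> C' m. p \<in> A}) \<le> t m"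
        proof (intro ballI allI)
          fix m p assume "m\<in>M"
          have "card {A \<in> C' m. p \<in> A} \<le> card {A \<in> C m. p \<in> A}"
            by (rule card_mono) (use finC \<open>m\<in>M\<close> in \<open>auto simp: C'_def\<close>)
          then show "real (card {A \<in> C' m. p \<in> A}) \<le> t m" using dep \<open>m\<in>M\<close>
            by (meson of_nat_le_iff order.trans)
        qed
      qed (use finM finJ cardJM in auto)
      have M2sub: "M2 \<subseteq> M" unfolding M2_def by auto
      have cardM2: "card M2 = card M - 2"
      proof -
        have "{m0,m1} \<subseteq> M" using m0 m1 by auto
        moreover have "card {m0,m1} = 2" using m1 by simp
        ultimately show ?thesis unfolding M2_def using finM card_Diff_subset[of "{m0,m1}" M] by simp
      qed
      have cardJ2: "card J2 = card J - 1" unfolding J2_def using jJ finJ by simp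
      have IH2: "(\<Prod>m\<in>M2. g m) \<le> real (card D2)"
        unfolding D2_def g_def
      proof (rule less.hyps)
        have "(\<Sum>m\<in>M2. card (C m)) \<le> (\<Sum>m\<in>M. card (C m))"
          by (rule sum_mono2[OF finM M2sub]) auto
        moreover have "card J2 < card J" using cardJ2 jJ finJ
          by (metis card_gt_0_iff diff_Suc_less empty_iff One_nat_def)
        ultimately show "card J2 + (\<Sum>m\<in>M2. card (C m)) < card J + (\<Sum>m\<in>M. card (C m))" by simp
        show "finite M2" using finM M2sub finite_subset by blast
        show "finite J2" using finJ J2_def by simp
        show "2 * card J2 \<le> card M2" using cardM2 cardJ2 cardJM jJ finJ
          by (simp add: card_gt_0_iff)
        show "\<forall>m\<in>M2. finite (C m)" using finC M2sub by auto
        have "(\<Union>m\<in>M2. C m) \<subseteq> (\<Union>m\<in>M. C m)" using M2sub by auto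
        then show "\<forall>j. compat (\<Union>m\<in>M2. C m) j" using cpt compat_mono by blast
        show "\<forall>m\<in>M2. \<forall>p. real (card {A \<in> C m. p \<in> A}) \<le> t m" using dep M2sub by auto
      qed
      have finB1: "finite B1" using finC m1 unfolding B1_def by auto
      have cardB1: "g m1 \<le> real (card B1)"
      proof -
        have "C m1 = B1 \<union> {A\<in>C m1. (q,j)\<in>A}" unfolding B1_def by auto
        then have "card (C m1) \<le> card B1 + card {A\<in>C m1. (q,j)\<in>A}"
          using card_Un_le[of B1 "{A\<in>C m1. (q,j)\<in>A}"] by simp
        then have "real (card (C m1)) \<le> real (card B1) + real (card {A\<in>C m1. (q,j)\<in>A})"
          by linarith
        moreover have "real (card {A\<in>C m1. (q,j)\<in>A}) \<le> t m1" using dep m1(1) by blast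
        ultimately have "real (card (C m1)) \<le> real (card B1) + t m1" by linarith
        then show ?thesis unfolding g_def by simp
      qed
      have injE: "inj_on (\<lambda>(b,h). h(m0 := A0, m1 := b)) (B1 \<times> D2)"
      proof (rule inj_onI, clarify)
        fix b h b' h' assume h: "b\<in>B1" "h\<in>D2" "b'\<in>B1" "h'\<in>D2"
          and eq: "h(m0 := A0, m1 := b) = h'(m0 := A0, m1 := b')"
        have "b = b'" using fun_cong[OF eq, of m1] by simp
        moreover have "h = h'"
        proof
          fix x
          show "h x = h' x"
          proof (cases "x = m0 \<or> x = m1")
            case True
            then have "x \<notin> M2" unfolding M2_def by auto
            then show ?thesis using h unfolding D2_def by (auto simp: PiE_def extensional_def)
          next
            case False
            then show ?thesis using fun_cong[OF eq, of x] by auto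
          qed
        qed
        ultimately show "b = b' \<and> h = h'" by simp
      qed
      have cardE: "real (card E) = real (card B1) * real (card D2)"
        unfolding E_def using card_image[OF injE] by (simp add: card_cartesian_product)
      have ED: "E \<subseteq> D"
      proof
        fix f assume "f \<in> E"
        then obtain b h where bh: "b\<in>B1" "h\<in>D2" and f: "f = h(m0 := A0, m1 := b)"
          unfolding E_def by auto
        have fP: "f \<in> PiE M C"
        proof (rule PiE_I)
          fix x assume "x\<in>M"
          then show "f x \<in> C x" using bh m0 m1 unfolding f D2_def B1_def M2_def by auto
        next
          fix x assume "x\<notin>M"
          then show "f x = undefined" using bh m0 m1 unfolding f D2_def M2_def by auto
        qed
        have "dead M f j'" if "j' \<in> J" for j'
        proof (cases "j' = j")
          case True
          show ?thesis unfolding dead_def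
          proof
            assume "\<exists>x. \<forall>m\<in>M. (x, j') \<in> f m"
            then obtain x where x: "\<forall>m\<in>M. (x, j) \<in> f m" using True by blast
            have "(x,j) \<in> A0" using x m0 m1 unfolding f by force
            moreover have "(x,j) \<in> b" using x m1 unfolding f by force
            moreover have "b \<in> F" using bh(1) m1 \<open>(x,j) \<in> b\<close> unfolding F_def B1_def by blast
            ultimately have "(q,j) \<in> b" using A0q by blast
            then show False using bh(1) unfolding B1_def by simp
          qed
        next
          case False
          then have "j' \<in> J2" using that J2_def by simp
          then have "dead M2 h j'" using bh(2) unfolding D2_def by simp
          then show ?thesis unfolding dead_def f M2_def by auto
        qed
        then show "f \<in> D" using fP unfolding D_def by simp
      qed
      have D'D: "D' \<subseteq> D"
        unfolding D'_def D_def C'_def by (auto simp: PiE_def Pi_def split: if_splits)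
      have disj: "D' \<inter> E = {}"
      proof -
        have "f m0 \<noteq> A0" if "f \<in> D'" for f using that m0 unfolding D'_def C'_def
          by (auto simp: PiE_def Pi_def)
        moreover have "f m0 = A0" if "f \<in> E" for f using that m1 unfolding E_def by auto
        ultimately show ?thesis by blast
      qed
      have finD: "finite D" unfolding D_def using finM finC by (simp add: finite_PiE)
      have cardD: "real (card D') + real (card E) \<le> real (card D)"
      proof -
        have "card D' + card E = card (D' \<union> E)"
          using disj finD D'D ED by (metis card_Un_disjoint rev_finite_subset)
        also have "\<dots> \<le> card D" using D'D ED finD by (intro card_mono) auto
        finally show ?thesis by (metis of_nat_add of_nat_le_iff)
      qed
      have gnn: "0 \<le> g m" for m unfolding g_def by simp
      have R0: "0 \<le> (\<Prod>m\<in>M2. g m)" using gnn by (simp add: prod_nonneg)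
      have split1: "(\<Prod>m\<in>M. g m) = g m0 * g m1 * (\<Prod>m\<in>M2. g m)"
      proof -
        have "(\<Prod>m\<in>M. g m) = g m0 * (\<Prod>m\<in>M-{m0}. g m)" using finM m0 by (simp add: prod.remove)
        also have "(\<Prod>m\<in>M-{m0}. g m) = g m1 * (\<Prod>m\<in>M-{m0}-{m1}. g m)"
          using finM m1 by (simp add: prod.remove)
        finally show ?thesis unfolding M2_def by (simp add: Diff_insert2[symmetric] insert_commute mult.assoc)
      qed
      define g' where "g' = (\<lambda>m. max 0 (real (card (C' m)) - t m))"
      have split2: "(\<Prod>m\<in>M. g' m) = g' m0 * g m1 * (\<Prod>m\<in>M2. g m)"
      proof -
        have "(\<Prod>m\<in>M. g' m) = g' m0 * (\<Prod>m\<in>M-{m0}. g' m)" using finM m0 by (simp add: prod.remove)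
        also have "(\<Prod>m\<in>M-{m0}. g' m) = (\<Prod>m\<in>M-{m0}. g m)"
          by (rule prod.cong) (auto simp: g_def g'_def C'_def)
        also have "(\<Prod>m\<in>M-{m0}. g m) = g m1 * (\<Prod>m\<in>M-{m0}-{m1}. g m)"
          using finM m1 by (simp add: prod.remove)
        finally show ?thesis unfolding M2_def by (simp add: Diff_insert2[symmetric] insert_commute mult.assoc)
      qed
      have g0: "g m0 \<le> g' m0 + 1"
      proof -
        have "card (C' m0) = card (C m0) - 1" unfolding C'_def using m0 finC by simp
        moreover have "card (C m0) \<ge> 1" using m0 finC by (metis card_0_eq empty_iff less_one not_le)
        ultimately have "real (card (C' m0)) = real (card (C m0)) - 1" by simp
        then show ?thesis unfolding g_def g'_def by simp
      qed
      have "(\<Prod>m\<in>M. g m) \<le> (g' m0 + 1) * g m1 * (\<Prod>m\<in>M2. g m)"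
        unfolding split1 using g0 gnn R0 by (intro mult_right_mono) auto
      also have "\<dots> = (\<Prod>m\<in>M. g' m) + g m1 * (\<Prod>m\<in>M2. g m)"
        unfolding split2 by (simp add: algebra_simps)
      also have "\<dots> \<le> real (card D') + real (card B1) * real (card D2)"
        using IH1 cardB1 IH2 gnn R0 unfolding g'_def by (intro add_mono mult_mono) auto
      also have "\<dots> \<le> real (card D)" using cardD cardE by simp
      finally show ?thesis unfolding D_def g_def .
    qed
  qed
qed

lemma convex_real_between:
  fixes S :: "real set"
  assumes "convex S" "x \<in> S" "z \<in> S" "x \<le> y" "y \<le> z"
  shows "y \<in> S"
  using assms is_interval_convex_1[of S] is_interval_1[of S] by blast

lemma C_equiv_sub: "A \<in> C_equiv d P \<Longrightarrow> A \<subseteq> P"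
  unfolding C_equiv_def by auto

lemma compat_Cequiv:
  assumes "P \<subseteq> UNIV \<times> {1..d}" "G \<subseteq> C_equiv d P"
  shows "compat G j"
  unfolding compat_def
proof (intro ballI allI impI)
  fix A B x y z
  assume A: "A \<in> G" and B: "B \<in> G" and xA: "(x,j)\<in>A" and zA: "(z,j)\<in>A" and yB: "(y,j)\<in>B"
    and xy: "x \<le> y" and yz: "y \<le> z"
  obtain I where I: "d_interval d I" "A = I \<inter> P" using A assms(2) unfolding C_equiv_def by blast
  obtain K where K: "\<forall>i\<in>{1..d}. convex (K i)" "I = {(x, i). i \<in> {1..d} \<and> x \<in> K i}"
    using I(1) unfolding d_interval_def by blast
  have jd: "j \<in> {1..d}" and xK: "x \<in> K j" and zK: "z \<in> K j" using xA zA I(2) K(2) by auto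
  have "y \<in> K j" using convex_real_between[OF K(1)[rule_format, OF jd] xK zK xy yz] .
  moreover have "(y,j) \<in> P" using yB B assms(2) C_equiv_sub by blast
  ultimately show "(y,j)\<in>A" using I(2) K(2) jd by auto
qed

theorem theorem6:
  fixes d :: nat and P :: "(real \<times> nat) set" and \<alpha> :: real
    and \<C> :: "nat \<Rightarrow> (real \<times> nat) set set"
  assumes "d \<ge> 1"
    and "P \<subseteq> UNIV \<times> {1..d}"
    and "0 < \<alpha>" and "\<alpha> \<le> 1"
    and "\<forall>i\<in>{1..2*d}. finite (\<C> i) \<and> \<C> i \<subseteq> C_equiv d P"
    and "real (card {f \<in> PiE {1..2*d} \<C>. (\<Inter>i\<in>{1..2*d}. f i) \<noteq> {}})
           \<ge> \<alpha> * (\<Prod>i\<in>{1..2*d}. real (card (\<C> i)))"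
  shows "\<exists>i\<in>{1..2*d}. \<exists>S \<subseteq> \<C> i.
           real (card S) \<ge> (1 - (1 - \<alpha>) powr (1 / real (2*d))) * real (card (\<C> i))
           \<and> (\<exists>p. \<forall>C\<in>S. p \<in> C)"
proof (rule ccontr)
  define M where "M = {1..2*d}"
  define b where "b = 1 - (1 - \<alpha>) powr (1 / real (2*d))"
  define n where "n = (\<lambda>i. real (card (\<C> i)))"
  assume "\<not> ?thesis"
  then have neg: "\<forall>i\<in>M. \<forall>S \<subseteq> \<C> i. (\<exists>p. \<forall>C\<in>S. p \<in> C) \<longrightarrow> real (card S) < b * n i"
    unfolding M_def b_def n_def by (meson not_le)
  have finM: "finite M" unfolding M_def by simp
  have cardM: "card M = 2*d" unfolding M_def by simp
  have finC: "\<forall>m\<in>M. finite (\<C> m)" using assms(5) unfolding M_def by blast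
  have subC: "\<forall>m\<in>M. \<C> m \<subseteq> C_equiv d P" using assms(5) unfolding M_def by blast
  have depth: "real (card {A\<in>\<C> i. p\<in>A}) < b * n i" if "i\<in>M" for i p
  proof (rule neg[rule_format, OF that])
    show "{A\<in>\<C> i. p\<in>A} \<subseteq> \<C> i" by auto
    show "\<exists>q. \<forall>C\<in>{A\<in>\<C> i. p\<in>A}. q \<in> C" by (rule exI[of _ p]) auto
  qed
  have bnpos: "0 < b * n i" if "i\<in>M" for i
  proof -
    show ?thesis using neg[rule_format, OF that, of "{}"] by simp
  qed
  have b1: "b \<le> 1" unfolding b_def by simp
  have ngt: "0 < n i" if "i\<in>M" for i
  proof -
    have "n i \<noteq> 0" using bnpos[OF that] by auto
    moreover have "0 \<le> n i" unfolding n_def by simp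
    ultimately show ?thesis by simp
  qed
  define t where "t = (\<lambda>i. real_of_int (\<lceil>b * n i\<rceil> - 1))"
  have dep: "\<forall>m\<in>M. \<forall>p. real (card {A\<in>\<C> m. p\<in>A}) \<le> t m"
  proof (intro ballI allI)
    fix m p assume m: "m\<in>M"
    have "int (card {A\<in>\<C> m. p\<in>A}) < \<lceil>b * n m\<rceil>"
      using depth[OF m] by (simp add: less_ceiling_iff)
    then have "int (card {A\<in>\<C> m. p\<in>A}) \<le> \<lceil>b * n m\<rceil> - 1" by simp
    then show "real (card {A\<in>\<C> m. p\<in>A}) \<le> t m" unfolding t_def
      by (metis of_int_le_iff of_int_of_nat_eq)
  qed
  have tlt: "t i < b * n i" for i unfolding t_def using ceiling_correct[of "b * n i"] by simp
  have cpt: "\<forall>j. compat (\<Union>m\<in>M. \<C> m) j"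
    using compat_Cequiv[OF assms(2)] subC by blast
  define D where "D = {f\<in>PiE M \<C>. \<forall>j\<in>{1..d}. dead M f j}"
  have main: "(\<Prod>m\<in>M. max 0 (real (card (\<C> m)) - t m)) \<le> real (card D)"
    unfolding D_def by (rule mainlem[OF finM _ _ finC cpt dep]) (simp_all add: cardM)
  define g where "g = (\<lambda>m. max 0 (real (card (\<C> m)) - t m))"
  have strict: "(\<Prod>m\<in>M. (1 - b) * n m) < (\<Prod>m\<in>M. g m)"
  proof (rule prod_mono_strict[of 1])
    show "1 \<in> M" unfolding M_def using assms(1) by simp
    have lt: "(1 - b) * n m < g m" for m
      using tlt[of m] unfolding g_def n_def by (simp add: algebra_simps)
    show "(1 - b) * n 1 < g 1" using lt .
    show "finite M" by (rule finM)
    show "0 \<le> (1 - b) * n i \<and> (1 - b) * n i \<le> g i" if "i\<in>M" for i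
      using lt[of i] b1 unfolding n_def by simp
    show "0 < g i" if "i\<in>M" for i
      using lt[of i] b1 ngt[OF that] by (smt (verit) mult_nonneg_nonneg)
  qed
  have pw: "(1 - b) ^ (2*d) = 1 - \<alpha>"
  proof (cases "\<alpha> = 1")
    case True
    then show ?thesis unfolding b_def using assms(1) by simp
  next
    case False
    then have pos: "0 < 1 - \<alpha>" using assms(4) by simp
    have bp: "0 < (1 - \<alpha>) powr (1 / real (2*d))" using pos by simp
    have "(1 - b) ^ (2*d) = ((1 - \<alpha>) powr (1 / real (2*d))) ^ (2*d)"
      unfolding b_def by simp
    also have "\<dots> = ((1 - \<alpha>) powr (1 / real (2*d))) powr real (2*d)"
      by (rule powr_realpow[OF bp, symmetric])
    also have "\<dots> = 1 - \<alpha>" unfolding powr_powr using assms(1) pos by simp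
    finally show ?thesis .
  qed
  have prodeq: "(\<Prod>m\<in>M. (1 - b) * n m) = (1 - \<alpha>) * (\<Prod>m\<in>M. n m)"
    by (simp add: prod.distrib cardM pw)
  define I where "I = {f \<in> PiE M \<C>. (\<Inter>i\<in>M. f i) \<noteq> {}}"
  have disj: "I \<inter> D = {}"
  proof (rule ccontr)
    assume "I \<inter> D \<noteq> {}"
    then obtain f where fI: "f \<in> I" and fD: "f \<in> D" by blast
    then obtain x j where xj: "(x,j) \<in> (\<Inter>i\<in>M. f i)" unfolding I_def by auto
    have oneM: "1 \<in> M" unfolding M_def using assms(1) by simp
    have "f 1 \<in> \<C> 1" using fI oneM unfolding I_def by auto
    then have "f 1 \<subseteq> P" using subC oneM C_equiv_sub by blast
    then have "j \<in> {1..d}" using xj oneM assms(2) by blast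
    then have "dead M f j" using fD unfolding D_def by blast
    then show False using xj unfolding dead_def by blast
  qed
  have finPi: "finite (PiE M \<C>)" using finM finC by (simp add: finite_PiE)
  have "card I + card D \<le> card (PiE M \<C>)"
  proof -
    have "card I + card D = card (I \<union> D)"
      by (rule card_Un_disjoint[symmetric]) (use finPi disj in \<open>auto simp: I_def D_def\<close>)
    also have "\<dots> \<le> card (PiE M \<C>)" by (rule card_mono[OF finPi]) (auto simp: I_def D_def)
    finally show ?thesis .
  qed
  moreover have "card (PiE M \<C>) = (\<Prod>m\<in>M. card (\<C> m))" by (simp add: card_PiE finM)
  ultimately have "real (card I) + real (card D) \<le> (\<Prod>m\<in>M. n m)"
    unfolding n_def by (metis of_nat_add of_nat_le_iff of_nat_prod)
  moreover have "(1 - \<alpha>) * (\<Prod>m\<in>M. n m) < real (card D)"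
    using strict main prodeq unfolding g_def by linarith
  moreover have "\<alpha> * (\<Prod>m\<in>M. n m) \<le> real (card I)"
    using assms(6) unfolding I_def M_def n_def by simp
  ultimately show False by (simp add: algebra_simps)
qed

end
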